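(* Let $X$ be a connected $k$-regular graph and $U$ the transition matrix of the Grover walk on $X$. Let $\lambda$ be an eigenvalue of $A(X)$ with $\lambda\neq\pm k$, let $E_\lambda$ be the orthogonal projection onto the $\lambda$-eigenspace of $A(X)$, and write $\lambda=k\cos\theta$ with $\theta\in(0,\pi)$. Then $e^{i\theta}$ and $e^{-i\theta}$ are eigenvalues of $U$, and if $F_{\theta_+}$ and $F_{\theta_-}$ denote the orthogonal projections onto the $e^{i\theta}$- and $e^{-i\theta}$-eigenspaces of $U$ respectively, then $F_{\theta_+}-F_{\theta_-}$ is a purely imaginary scalar multiple of \[D_t^TE_\lambda D_h - D_h^TE_\lambda D_t.\]
   Context: Each edge $\{a,b\}$ of $X$ is replaced by arcs $(a,b)$ and $(b,a)$. The line digraph $\mathrm{LD}(X)$ has the arcs as vertices, with an arc from $(a,b)$ to $(c,d)$ iff $b=c$; $A(\mathrm{LD}(X))$ is its $01$-adjacency matrix. $R$ is the permutation matrix on arcs mapping $(a,b)$ to $(b,a)$. The transition matrix of the Grover walk is $U=\frac{2}{k}A(\mathrm{LD}(X))-R$ (a real orthogonal matrix). $D_t$ and $D_h$ have rows indexed by vertices and columns by arcs: $(D_t)_{u,(a,b)}=1$ iff $u=a$, $(D_h)_{u,(a,b)}=1$ iff $u=b$, and $0$ otherwise. *)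

theory Defs
  imports Complex_Main
begin

text \<open>Finite simple graphs: vertex set is a finite type, adjacency a symmetric irreflexive relation.
  Matrices are functions of two indices, considered only on explicit finite index sets.\<close>

definition simple_graph :: "('v \<Rightarrow> 'v \<Rightarrow> bool) \<Rightarrow> bool" where
  "simple_graph E \<longleftrightarrow> (\<forall>a b. E a b \<longrightarrow> E b a) \<and> (\<forall>a. \<not> E a a)"

definition regular_graph :: "('v \<Rightarrow> 'v \<Rightarrow> bool) \<Rightarrow> nat \<Rightarrow> bool" where
  "regular_graph E k \<longleftrightarrow> (\<forall>v. card {u. E v u} = k)"

definition connected_graph :: "('v \<Rightarrow> 'v \<Rightarrow> bool) \<Rightarrow> bool" where
  "connected_graph E \<longleftrightarrow> (\<forall>u v. E\<^sup>*\<^sup>* u v)"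

definition adj_matrix :: "('v \<Rightarrow> 'v \<Rightarrow> bool) \<Rightarrow> 'v \<Rightarrow> 'v \<Rightarrow> complex" where
  "adj_matrix E u v = (if E u v then 1 else 0)"

definition arcs :: "('v \<Rightarrow> 'v \<Rightarrow> bool) \<Rightarrow> ('v \<times> 'v) set" where
  "arcs E = {(a,b). E a b}"

definition line_digraph_adj :: "('v \<times> 'v) \<Rightarrow> ('v \<times> 'v) \<Rightarrow> complex" where
  "line_digraph_adj x y = (if snd x = fst y then 1 else 0)"

definition arc_reversal :: "('v \<times> 'v) \<Rightarrow> ('v \<times> 'v) \<Rightarrow> complex" where
  "arc_reversal x y = (if y = (snd x, fst x) then 1 else 0)"

definition grover_U :: "nat \<Rightarrow> ('v \<times> 'v) \<Rightarrow> ('v \<times> 'v) \<Rightarrow> complex" where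
  "grover_U k x y = (2 / of_nat k) * line_digraph_adj x y - arc_reversal x y"

definition tail_inc :: "'v \<Rightarrow> ('v \<times> 'v) \<Rightarrow> complex" where
  "tail_inc u x = (if u = fst x then 1 else 0)"

definition head_inc :: "'v \<Rightarrow> ('v \<times> 'v) \<Rightarrow> complex" where
  "head_inc u x = (if u = snd x then 1 else 0)"

definition mat_vec :: "'i set \<Rightarrow> ('i \<Rightarrow> 'i \<Rightarrow> complex) \<Rightarrow> ('i \<Rightarrow> complex) \<Rightarrow> 'i \<Rightarrow> complex" where
  "mat_vec I M x = (\<lambda>i. \<Sum>j\<in>I. M i j * x j)"

definition eigenspace_on :: "'i set \<Rightarrow> ('i \<Rightarrow> 'i \<Rightarrow> complex) \<Rightarrow> complex \<Rightarrow> ('i \<Rightarrow> complex) set" where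
  "eigenspace_on I M \<mu> = {x. \<forall>i\<in>I. mat_vec I M x i = \<mu> * x i}"

definition is_eigenvalue_on :: "'i set \<Rightarrow> ('i \<Rightarrow> 'i \<Rightarrow> complex) \<Rightarrow> complex \<Rightarrow> bool" where
  "is_eigenvalue_on I M \<mu> \<longleftrightarrow> (\<exists>x\<in>eigenspace_on I M \<mu>. \<exists>i\<in>I. x i \<noteq> 0)"

definition orth_proj_onto :: "'i set \<Rightarrow> ('i \<Rightarrow> complex) set \<Rightarrow> ('i \<Rightarrow> 'i \<Rightarrow> complex) \<Rightarrow> bool" where
  "orth_proj_onto I W P \<longleftrightarrow>
     (\<forall>x. mat_vec I P x \<in> W \<and>
          (\<forall>w\<in>W. (\<Sum>i\<in>I. (x i - mat_vec I P x i) * cnj (w i)) = 0))"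

end

theory Submission
  imports Defs
begin

lemma arcs_sum:
  fixes E :: "'v::finite \<Rightarrow> 'v \<Rightarrow> bool"
  shows "(\<Sum>p\<in>arcs E. f p) = (\<Sum>a\<in>UNIV. \<Sum>b\<in>UNIV. if E a b then f (a,b) else 0)"
proof -
  have "(\<Sum>p\<in>arcs E. f p) = (\<Sum>p\<in>UNIV. if p \<in> arcs E then f p else 0)"
    by (simp add: sum.If_cases Int_absorb1)
  also have "\<dots> = (\<Sum>p\<in>UNIV \<times> UNIV. if E (fst p) (snd p) then f p else 0)"
    by (simp add: arcs_def case_prod_beta)
  also have "\<dots> = (\<Sum>a\<in>UNIV. \<Sum>b\<in>UNIV. if E a b then f (a,b) else 0)"
    by (simp only: sum.cartesian_product UNIV_Times_UNIV) (rule sum.cong; auto)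
  finally show ?thesis .
qed

lemma deg_sum:
  fixes E :: "'v::finite \<Rightarrow> 'v \<Rightarrow> bool"
  assumes "regular_graph E k"
  shows "(\<Sum>j\<in>UNIV. if E v j then (c::complex) else 0) = of_nat k * c"
proof -
  have "(\<Sum>j\<in>UNIV. if E v j then (c::complex) else 0) = (\<Sum>j\<in>{j. E v j}. c)"
    by (simp add: sum.If_cases Int_def)
  also have "\<dots> = of_nat k * c" using assms by (simp add: regular_graph_def)
  finally show ?thesis .
qed

lemma A_apply:
  "mat_vec UNIV (adj_matrix E) z v = (\<Sum>j\<in>UNIV. if E v j then z j else 0)"
  unfolding mat_vec_def adj_matrix_def by (rule sum.cong) auto

lemma U_apply:
  fixes E :: "'v::finite \<Rightarrow> 'v \<Rightarrow> bool"
  assumes "simple_graph E" "(a,b) \<in> arcs E"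
  shows "mat_vec (arcs E) (grover_U k) x (a,b)
     = 2 / of_nat k * (\<Sum>d\<in>UNIV. if E b d then x (b,d) else 0) - x (b,a)"
proof -
  have ba: "(b,a) \<in> arcs E" using assms by (auto simp: arcs_def simple_graph_def)
  have "mat_vec (arcs E) (grover_U k) x (a,b)
     = (\<Sum>q\<in>arcs E. 2 / of_nat k * ((if b = fst q then 1 else 0) * x q))
       - (\<Sum>q\<in>arcs E. (if q = (b,a) then x q else 0))"
    unfolding mat_vec_def sum_subtractf[symmetric]
    by (rule sum.cong) (auto simp: grover_U_def line_digraph_adj_def arc_reversal_def algebra_simps)
  also have "(\<Sum>q\<in>arcs E. (if q = (b,a) then x q else 0)) = x (b,a)"
    using ba by (simp add: sum.delta)
  also have "(\<Sum>q\<in>arcs E. 2 / of_nat k * ((if b = fst q then 1 else 0) * x q))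
     = 2 / of_nat k * (\<Sum>c\<in>UNIV. \<Sum>d\<in>UNIV. if E c d then (if b = c then x (c,d) else 0) else 0)"
    unfolding arcs_sum sum_distrib_left by (intro sum.cong) auto
  also have "(\<Sum>c\<in>UNIV. \<Sum>d\<in>UNIV. if E c d then (if b = c then x (c,d) else 0) else 0)
     = (\<Sum>c\<in>UNIV. if b = c then (\<Sum>d\<in>UNIV. if E c d then x (c,d) else 0) else 0)"
  proof (rule sum.cong)
    fix c show "(\<Sum>d\<in>UNIV. if E c d then (if b = c then x (c,d) else 0) else 0) = (if b = c then (\<Sum>d\<in>UNIV. if E c d then x (c,d) else 0) else 0)"
      by (cases "b = c") (simp_all cong: if_cong)
  qed simp
  finally show ?thesis by simp
qed

definition Wv :: "complex \<Rightarrow> ('v \<Rightarrow> complex) \<Rightarrow> 'v \<times> 'v \<Rightarrow> complex" where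
  "Wv \<mu> z p = z (snd p) - cnj \<mu> * z (fst p)"

lemma W_eigen:
  fixes E :: "'v::finite \<Rightarrow> 'v \<Rightarrow> bool"
  assumes "simple_graph E" "regular_graph E k" "k > 0" "cnj \<mu> * \<mu> = 1"
    "2 * L = of_nat k * (\<mu> + cnj \<mu>)"
    "\<forall>v. (\<Sum>j\<in>UNIV. if E v j then z j else 0) = L * z v"
  shows "Wv \<mu> z \<in> eigenspace_on (arcs E) (grover_U k) \<mu>"
  unfolding eigenspace_on_def
proof (clarify)
  fix a b assume ab: "(a,b) \<in> arcs E"
  have "(\<Sum>d\<in>UNIV. if E b d then Wv \<mu> z (b,d) else 0)
      = (\<Sum>d\<in>UNIV. (if E b d then z d else 0) - (if E b d then cnj \<mu> * z b else 0))"
    by (rule sum.cong) (auto simp: Wv_def)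
  also have "\<dots> = L * z b - of_nat k * (cnj \<mu> * z b)"
    using assms(2,6) by (simp add: sum_subtractf deg_sum)
  finally have s: "(\<Sum>d\<in>UNIV. if E b d then Wv \<mu> z (b,d) else 0) = L * z b - of_nat k * (cnj \<mu> * z b)" .
  have K: "(of_nat k :: complex) \<noteq> 0" using assms(3) by simp
  have L: "L = of_nat k * (\<mu> + cnj \<mu>) / 2" using assms(5) by (simp add: eq_divide_eq mult.commute)
  show "mat_vec (arcs E) (grover_U k) (Wv \<mu> z) (a, b) = \<mu> * Wv \<mu> z (a, b)"
    unfolding U_apply[OF assms(1) ab] s L using K assms(4)
    by (simp add: Wv_def field_simps)
qed

lemma W_char:
  fixes E :: "'v::finite \<Rightarrow> 'v \<Rightarrow> bool"
  assumes "simple_graph E" "regular_graph E k" "k > 0" "cnj \<mu> * \<mu> = 1" "\<mu>^2 \<noteq> 1"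
    "2 * L = of_nat k * (\<mu> + cnj \<mu>)"
    "x \<in> eigenspace_on (arcs E) (grover_U k) \<mu>"
  shows "\<exists>z. (\<forall>v. (\<Sum>j\<in>UNIV. if E v j then z j else 0) = L * z v) \<and> (\<forall>p\<in>arcs E. x p = Wv \<mu> z p)"
proof -
  define K :: complex where "K = of_nat k"
  have K: "K \<noteq> 0" using assms(3) by (simp add: K_def)
  have m0: "\<mu> \<noteq> 0" using assms(4) by auto
  have cm: "cnj \<mu> = 1 / \<mu>" using assms(4) m0 by (simp add: field_simps)
  have m1: "1 - \<mu>^2 \<noteq> 0" using assms(5) by simp
  have L: "L = K * (\<mu> + 1/\<mu>) / 2" using assms(6) cm by (simp add: eq_divide_eq mult.commute K_def)
  define T where "T v = (\<Sum>d\<in>UNIV. if E v d then x (v,d) else 0)" for v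
  define c1 where "c1 = 2 / (K * (1 - \<mu>^2))"
  have ev: "2 / K * T b - x (b,a) = \<mu> * x (a,b)" if "(a,b) \<in> arcs E" for a b
    using assms(7) that U_apply[OF assms(1) that, of k x]
    by (auto simp: eigenspace_on_def T_def K_def)
  have xab: "x (a,b) = c1 * (T a - \<mu> * T b)" if "E a b" for a b
  proof -
    have ab: "(a,b) \<in> arcs E" and ba: "(b,a) \<in> arcs E" using that assms(1)
      by (auto simp: arcs_def simple_graph_def)
    have e1: "x (b,a) = 2 / K * T b - \<mu> * x (a,b)" using ev[OF ab] by (simp add: algebra_simps)
    have e2: "2 / K * T a - x (a,b) = \<mu> * x (b,a)" using ev[OF ba] .
    have "(1 - \<mu>^2) * x (a,b) = 2 / K * (T a - \<mu> * T b)"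
      using e2 unfolding e1 by (simp add: algebra_simps power2_eq_square)
    then show ?thesis using m1 K by (simp add: c1_def field_simps)
  qed
  have AT: "(\<Sum>b\<in>UNIV. if E a b then T b else 0) = L * T a" for a
  proof -
    have "T a = (\<Sum>b\<in>UNIV. (if E a b then c1 * T a else 0) - c1 * \<mu> * (if E a b then T b else 0))"
      by (subst T_def) (rule sum.cong, auto simp: xab algebra_simps)
    also have "\<dots> = K * (c1 * T a) - c1 * \<mu> * (\<Sum>b\<in>UNIV. if E a b then T b else 0)"
      using assms(2) by (simp add: sum_subtractf deg_sum sum_distrib_left K_def)
    finally have h: "T a = K * (c1 * T a) - c1 * \<mu> * (\<Sum>b\<in>UNIV. if E a b then T b else 0)" .
    have "c1 * \<mu> * (\<Sum>b\<in>UNIV. if E a b then T b else 0) = c1 * \<mu> * (L * T a)"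
      using h m1 K m0 unfolding L c1_def by (simp add: field_simps power2_eq_square)
    then show ?thesis using m1 K m0 by (simp add: c1_def)
  qed
  define z where "z v = - \<mu> * c1 * T v" for v
  have "(\<Sum>j\<in>UNIV. if E v j then z j else 0) = L * z v" for v
  proof -
    have "(\<Sum>j\<in>UNIV. if E v j then z j else 0) = - \<mu> * c1 * (\<Sum>j\<in>UNIV. if E v j then T j else 0)"
      unfolding z_def sum_distrib_left by (rule sum.cong) auto
    then show ?thesis using AT by (simp add: z_def)
  qed
  moreover have "\<forall>p\<in>arcs E. x p = Wv \<mu> z p"
  proof
    fix p assume "p \<in> arcs E"
    then obtain a b where p: "p = (a,b)" "E a b" by (auto simp: arcs_def)
    show "x p = Wv \<mu> z p" unfolding p xab[OF p(2)] Wv_def z_def using assms(4)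
      by (simp add: algebra_simps)
  qed
  ultimately show ?thesis by blast
qed

lemma W_inner:
  fixes E :: "'v::finite \<Rightarrow> 'v \<Rightarrow> bool"
  assumes "simple_graph E" "regular_graph E k" "cnj \<mu> * \<mu> = 1" "cnj L = L"
    "\<forall>v. (\<Sum>j\<in>UNIV. if E v j then z' j else 0) = L * z' v"
  shows "(\<Sum>p\<in>arcs E. Wv \<mu> z p * cnj (Wv \<mu> z' p))
       = (2 * of_nat k - L * (\<mu> + cnj \<mu>)) * (\<Sum>v\<in>UNIV. z v * cnj (z' v))"
proof -
  have sym: "E a b = E b a" for a b using assms(1) by (auto simp: simple_graph_def)
  define S where "S = (\<Sum>v\<in>UNIV. z v * cnj (z' v))"
  have swap: "(\<Sum>a\<in>UNIV. \<Sum>b\<in>UNIV. if E a b then g a b else 0)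
            = (\<Sum>b\<in>UNIV. \<Sum>a\<in>UNIV. if E b a then g a b else 0)" for g :: "'v \<Rightarrow> 'v \<Rightarrow> complex"
    by (subst sum.swap) (simp add: sym)
  have Acnj: "(\<Sum>b\<in>UNIV. if E a b then (c::complex) * cnj (z' b) else 0) = c * cnj (L * z' a)" for a c
  proof -
    have "(\<Sum>b\<in>UNIV. if E a b then c * cnj (z' b) else 0) = c * cnj (\<Sum>b\<in>UNIV. if E a b then z' b else 0)"
      by (simp add: sum_distrib_left cnj_sum if_distrib) (rule sum.cong, auto)
    then show ?thesis using assms(5) by simp
  qed
  have S1: "(\<Sum>a\<in>UNIV. \<Sum>b\<in>UNIV. if E a b then z b * cnj (z' b) else 0) = of_nat k * S"
    by (subst swap) (use assms(2) in \<open>simp add: deg_sum S_def sum_distrib_left\<close>)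
  have S2: "(\<Sum>a\<in>UNIV. \<Sum>b\<in>UNIV. if E a b then z b * cnj (z' a) else 0) = L * S"
    by (subst swap) (use assms(4) in \<open>simp add: Acnj S_def sum_distrib_left algebra_simps\<close>)
  have S3: "(\<Sum>a\<in>UNIV. \<Sum>b\<in>UNIV. if E a b then z a * cnj (z' b) else 0) = L * S"
    unfolding Acnj using assms(4) by (simp add: S_def sum_distrib_left algebra_simps)
  have S4: "(\<Sum>a\<in>UNIV. \<Sum>b\<in>UNIV. if E a b then z a * cnj (z' a) else 0) = of_nat k * S"
    using assms(2) by (simp add: deg_sum S_def sum_distrib_left)
  have "(\<Sum>p\<in>arcs E. Wv \<mu> z p * cnj (Wv \<mu> z' p))
     = (\<Sum>a\<in>UNIV. \<Sum>b\<in>UNIV. (if E a b then z b * cnj (z' b) else 0)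
         - \<mu> * (if E a b then z b * cnj (z' a) else 0)
         - cnj \<mu> * (if E a b then z a * cnj (z' b) else 0)
         + (if E a b then z a * cnj (z' a) else 0))"
    unfolding arcs_sum Wv_def
  proof (intro sum.cong refl)
    fix a b
    have "(z b - cnj \<mu> * z a) * cnj (z' b - cnj \<mu> * z' a)
       = z b * cnj (z' b) - \<mu> * (z b * cnj (z' a)) - cnj \<mu> * (z a * cnj (z' b)) + (cnj \<mu> * \<mu>) * (z a * cnj (z' a))"
      by (simp add: algebra_simps)
    then show "(if E a b then (z (snd (a, b)) - cnj \<mu> * z (fst (a, b))) * cnj (z' (snd (a, b)) - cnj \<mu> * z' (fst (a, b))) else 0)
       = (if E a b then z b * cnj (z' b) else 0) - \<mu> * (if E a b then z b * cnj (z' a) else 0)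
         - cnj \<mu> * (if E a b then z a * cnj (z' b) else 0) + (if E a b then z a * cnj (z' a) else 0)"
      using assms(3) by simp
  qed
  also have "\<dots> = (\<Sum>a\<in>UNIV. \<Sum>b\<in>UNIV. if E a b then z b * cnj (z' b) else 0)
     - \<mu> * (\<Sum>a\<in>UNIV. \<Sum>b\<in>UNIV. if E a b then z b * cnj (z' a) else 0)
     - cnj \<mu> * (\<Sum>a\<in>UNIV. \<Sum>b\<in>UNIV. if E a b then z a * cnj (z' b) else 0)
     + (\<Sum>a\<in>UNIV. \<Sum>b\<in>UNIV. if E a b then z a * cnj (z' a) else 0)"
    by (simp only: sum.distrib sum_subtractf sum_distrib_left)
  also have "\<dots> = of_nat k * S - \<mu> * (L * S) - cnj \<mu> * (L * S) + of_nat k * S"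
    by (simp only: S1 S2 S3 S4)
  finally show ?thesis by (simp add: S_def algebra_simps)
qed

lemma eig_diff:
  assumes "x \<in> eigenspace_on I M \<mu>" "y \<in> eigenspace_on I M \<mu>"
  shows "(\<lambda>i. x i - y i) \<in> eigenspace_on I M \<mu>"
  using assms unfolding eigenspace_on_def mat_vec_def
  by (simp add: right_diff_distrib sum_subtractf)

lemma eig_scale:
  assumes "x \<in> eigenspace_on I M \<mu>"
  shows "(\<lambda>i. c * x i) \<in> eigenspace_on I M \<mu>"
proof -
  have "(\<Sum>j\<in>I. M i j * (c * x j)) = c * (\<Sum>j\<in>I. M i j * x j)" for i
    by (simp add: sum_distrib_left algebra_simps)
  then show ?thesis using assms unfolding eigenspace_on_def mat_vec_def by (simp add: algebra_simps)
qed

lemma sum_sq_zero: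
  assumes "finite A" "(\<Sum>p\<in>A. x p * cnj (x p)) = (0::complex)" "p \<in> A"
  shows "x p = 0"
proof -
  have "(\<Sum>p\<in>A. x p * cnj (x p)) = of_real (\<Sum>p\<in>A. (cmod (x p))^2)"
    unfolding of_real_sum by (rule sum.cong) (simp_all only: complex_norm_square refl)
  then have "(\<Sum>p\<in>A. (cmod (x p))^2) = 0" using assms(2) by (metis of_real_eq_0_iff)
  then have "(cmod (x p))^2 = 0" using assms(1,3) by (subst (asm) sum_nonneg_eq_0_iff) auto
  then show ?thesis by simp
qed

lemma Eig_iff:
  "z \<in> eigenspace_on UNIV (adj_matrix E) L \<longleftrightarrow> (\<forall>v. (\<Sum>j\<in>UNIV. if E v j then z j else 0) = L * z v)"
  by (simp add: eigenspace_on_def A_apply)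

lemma delta_mult:
  assumes "finite A"
  shows "(\<Sum>p\<in>A. (if p = q then (1::complex) else 0) * f p) = (if q \<in> A then f q else 0)"
proof -
  have "(\<Sum>p\<in>A. (if p = q then (1::complex) else 0) * f p) = (\<Sum>p\<in>A. if p = q then f p else 0)"
    by (rule sum.cong) auto
  then show ?thesis using assms by simp
qed

lemma delta_mult':
  assumes "finite A"
  shows "(\<Sum>p\<in>A. f p * (if p = q then (1::complex) else 0)) = (if q \<in> A then f q else 0)"
  using delta_mult[OF assms, of q f] by (simp add: mult.commute)

lemma proj_formula:
  fixes E :: "'v::finite \<Rightarrow> 'v \<Rightarrow> bool"
  assumes G: "simple_graph E" "regular_graph E k" "k > 0"
    and mu: "cnj \<mu> * \<mu> = 1" "\<mu>^2 \<noteq> 1"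
    and L: "2 * L = of_nat k * (\<mu> + cnj \<mu>)" "cnj L = L"
    and El: "orth_proj_onto UNIV (eigenspace_on UNIV (adj_matrix E) L) El"
    and F: "orth_proj_onto (arcs E) (eigenspace_on (arcs E) (grover_U k) \<mu>) F"
    and ab: "(a,b) \<in> arcs E" and cd: "(c,d) \<in> arcs E"
  shows "F (a,b) (c,d) = (El b d - \<mu> * El b c - cnj \<mu> * El a d + El a c)
                          / (2 * of_nat k - L * (\<mu> + cnj \<mu>))"
proof -
  define s where "s = 2 * of_nat k - L * (\<mu> + cnj \<mu>)"
  define K :: complex where "K = of_nat k"
  have K: "K \<noteq> 0" using G(3) by (simp add: K_def)
  have Ls: "L = K * (\<mu> + cnj \<mu>) / 2" using L(1) by (simp add: eq_divide_eq mult.commute K_def)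
  have "s = - K / 2 * (\<mu> - cnj \<mu>)^2"
    unfolding s_def Ls K_def[symmetric] using mu(1)
    by (simp add: field_simps power2_eq_square)
  moreover have "\<mu> - cnj \<mu> \<noteq> 0"
  proof
    assume "\<mu> - cnj \<mu> = 0"
    then have "\<mu>^2 = cnj \<mu> * \<mu>" by (simp add: power2_eq_square)
    with mu show False by simp
  qed
  ultimately have s0: "s \<noteq> 0" using K by simp
  define W where "W = eigenspace_on (arcs E) (grover_U k) \<mu>"
  define q where "q = (c,d)"
  define e where "e p = (if p = q then 1 else (0::complex))" for p
  define y0 where "y0 v = (if v = d then 1 else 0) - \<mu> * (if v = c then 1 else (0::complex))" for v
  define z0 where "z0 = mat_vec UNIV El y0"
  have z0v: "z0 u = El u d - \<mu> * El u c" for u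
  proof -
    have "z0 u = (\<Sum>j\<in>UNIV. (if j = d then El u d else 0) - (if j = c then \<mu> * El u c else 0))"
      unfolding z0_def mat_vec_def y0_def by (rule sum.cong) (auto simp: algebra_simps)
    then show ?thesis by (simp add: sum_subtractf)
  qed
  have z0E: "z0 \<in> eigenspace_on UNIV (adj_matrix E) L" and
    z0orth: "\<And>w. w \<in> eigenspace_on UNIV (adj_matrix E) L \<Longrightarrow> (\<Sum>i\<in>UNIV. (y0 i - z0 i) * cnj (w i)) = 0"
    using El unfolding orth_proj_onto_def z0_def by auto
  define z1 where "z1 v = 1 / s * z0 v" for v
  have z1E: "\<forall>v. (\<Sum>j\<in>UNIV. if E v j then z1 j else 0) = L * z1 v"
    unfolding Eig_iff[symmetric] z1_def by (rule eig_scale[OF z0E])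
  define g where "g = Wv \<mu> z1"
  have gW: "g \<in> W" unfolding g_def W_def using W_eigen[OF G mu(1) L(1) z1E] .
  have gorth: "(\<Sum>p\<in>arcs E. (e p - g p) * cnj (w p)) = 0" if wW: "w \<in> W" for w
  proof -
    obtain z' where z': "\<forall>v. (\<Sum>j\<in>UNIV. if E v j then z' j else 0) = L * z' v"
      "\<forall>p\<in>arcs E. w p = Wv \<mu> z' p"
      using W_char[OF G mu L(1) wW[unfolded W_def]] by blast
    have "(\<Sum>p\<in>arcs E. (e p - g p) * cnj (w p))
        = (\<Sum>p\<in>arcs E. e p * cnj (Wv \<mu> z' p)) - (\<Sum>p\<in>arcs E. g p * cnj (Wv \<mu> z' p))"
      by (simp add: sum_subtractf[symmetric] left_diff_distrib z'(2))
    also have "(\<Sum>p\<in>arcs E. e p * cnj (Wv \<mu> z' p)) = cnj (Wv \<mu> z' q)"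
      using cd by (simp add: e_def q_def delta_mult)
    also have "\<dots> = (\<Sum>v\<in>UNIV. y0 v * cnj (z' v))"
      by (simp add: q_def Wv_def y0_def left_diff_distrib sum_subtractf delta_mult mult.assoc sum_distrib_left[symmetric])
    also have "(\<Sum>p\<in>arcs E. g p * cnj (Wv \<mu> z' p)) = s * (\<Sum>v\<in>UNIV. z1 v * cnj (z' v))"
      unfolding g_def s_def by (rule W_inner[OF G(1,2) mu(1) L(2) z'(1)])
    also have "\<dots> = (\<Sum>v\<in>UNIV. z0 v * cnj (z' v))"
      using s0 by (simp add: z1_def sum_distrib_left)
    also have "(\<Sum>v\<in>UNIV. y0 v * cnj (z' v)) - (\<Sum>v\<in>UNIV. z0 v * cnj (z' v)) = 0"
      using z0orth[of z'] z'(1) unfolding Eig_iff by (simp add: sum_subtractf[symmetric] left_diff_distrib)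
    finally show ?thesis .
  qed
  define f where "f = mat_vec (arcs E) F e"
  have fW: "f \<in> W" and forth: "\<And>w. w \<in> W \<Longrightarrow> (\<Sum>p\<in>arcs E. (e p - f p) * cnj (w p)) = 0"
    using F unfolding orth_proj_onto_def f_def W_def by auto
  define dd where "dd p = f p - g p" for p
  have ddW: "dd \<in> W" unfolding dd_def using eig_diff[OF fW[unfolded W_def] gW[unfolded W_def]] by (simp add: W_def)
  have "(\<Sum>p\<in>arcs E. dd p * cnj (dd p))
      = (\<Sum>p\<in>arcs E. (e p - g p) * cnj (dd p)) - (\<Sum>p\<in>arcs E. (e p - f p) * cnj (dd p))"
    by (simp add: sum_subtractf[symmetric] dd_def algebra_simps)
  also have "\<dots> = 0" using gorth[OF ddW] forth[OF ddW] by simp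
  finally have "dd (a,b) = 0" using sum_sq_zero[of "arcs E" dd "(a,b)"] ab by simp
  moreover have "f (a,b) = F (a,b) (c,d)"
    using cd by (simp add: f_def mat_vec_def e_def q_def delta_mult')
  ultimately have "F (a,b) (c,d) = g (a,b)" by (simp add: dd_def)
  also have "\<dots> = (El b d - \<mu> * El b c - cnj \<mu> * El a d + El a c) / s"
    unfolding g_def Wv_def z1_def z0v using mu(1) s0
    by (simp add: field_simps)
  finally show ?thesis by (simp add: s_def)
qed

lemma exists_eig:
  fixes E :: "'v::finite \<Rightarrow> 'v \<Rightarrow> bool"
  assumes G: "simple_graph E" "regular_graph E k" "k > 0"
    and mu: "cnj \<mu> * \<mu> = 1" "\<mu>^2 \<noteq> 1"
    and L: "2 * L = of_nat k * (\<mu> + cnj \<mu>)"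
    and ev: "is_eigenvalue_on UNIV (adj_matrix E) L"
  shows "is_eigenvalue_on (arcs E) (grover_U k) \<mu>"
proof -
  obtain z i where z: "z \<in> eigenspace_on UNIV (adj_matrix E) L" and zi: "z i \<noteq> 0"
    using ev unfolding is_eigenvalue_on_def by blast
  have "card {j. E i j} = k" using G(2) by (simp add: regular_graph_def)
  then have "{j. E i j} \<noteq> {}" using G(3) by (metis card.empty less_irrefl)
  then obtain j where ij: "E i j" by auto
  have ji: "E j i" using ij G(1) by (simp add: simple_graph_def)
  have Wz: "Wv \<mu> z \<in> eigenspace_on (arcs E) (grover_U k) \<mu>"
    using W_eigen[OF G mu(1) L] z unfolding Eig_iff by blast
  show ?thesis unfolding is_eigenvalue_on_def
  proof (rule bexI[OF _ Wz], rule ccontr)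
    assume "\<not> (\<exists>p\<in>arcs E. Wv \<mu> z p \<noteq> 0)"
    then have h: "\<And>p. p \<in> arcs E \<Longrightarrow> Wv \<mu> z p = 0" by blast
    have "z j = cnj \<mu> * z i" using h[of "(i,j)"] ij by (simp add: arcs_def Wv_def)
    moreover have "z i = cnj \<mu> * z j" using h[of "(j,i)"] ji by (simp add: arcs_def Wv_def)
    ultimately have "z i = (cnj \<mu>)^2 * z i" by (simp add: power2_eq_square)
    then have "(cnj \<mu>)^2 = 1" using zi by simp
    then have "cnj (\<mu>^2) = cnj 1" by simp
    then have "\<mu>^2 = 1" by (simp only: complex_cnj_cancel_iff)
    with mu(2) show False ..
  qed
qed

lemma inc_sum:
  fixes El :: "'v::finite \<Rightarrow> 'v \<Rightarrow> complex"
  shows "(\<Sum>u\<in>UNIV. \<Sum>v\<in>UNIV. tail_inc u (a,b) * El u v * head_inc v (c,d)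
                        - head_inc u (a,b) * El u v * tail_inc v (c,d)) = El a d - El b c"
  by (simp add: tail_inc_def head_inc_def sum_subtractf delta_mult delta_mult')

theorem corollary5p2:
  fixes E :: "'v::finite \<Rightarrow> 'v \<Rightarrow> bool" and k :: nat and lam \<theta> :: real
  assumes "simple_graph E" and "connected_graph E" and "regular_graph E k"
    and "is_eigenvalue_on UNIV (adj_matrix E) (complex_of_real lam)"
    and "lam \<noteq> real k" and "lam \<noteq> - real k"
    and "lam = real k * cos \<theta>" and "0 < \<theta>" and "\<theta> < pi"
  shows "is_eigenvalue_on (arcs E) (grover_U k) (exp (\<i> * complex_of_real \<theta>))
       \<and> is_eigenvalue_on (arcs E) (grover_U k) (exp (- \<i> * complex_of_real \<theta>))
       \<and> (\<forall>El Fp Fm.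
            orth_proj_onto UNIV (eigenspace_on UNIV (adj_matrix E) (complex_of_real lam)) El
          \<and> orth_proj_onto (arcs E) (eigenspace_on (arcs E) (grover_U k) (exp (\<i> * complex_of_real \<theta>))) Fp
          \<and> orth_proj_onto (arcs E) (eigenspace_on (arcs E) (grover_U k) (exp (- \<i> * complex_of_real \<theta>))) Fm
          \<longrightarrow> (\<exists>c. Re c = 0 \<and>
                (\<forall>x\<in>arcs E. \<forall>y\<in>arcs E.
                   Fp x y - Fm x y =
                   c * (\<Sum>u\<in>UNIV. \<Sum>v\<in>UNIV.
                          tail_inc u x * El u v * head_inc v y
                        - head_inc u x * El u v * tail_inc v y))))"
proof -
  note G0 = assms(1,3)
  have kpos: "k > 0"
  proof (rule ccontr)
    assume "\<not> 0 < k" then have "k = 0" by simp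
    with assms(5,7) show False by simp
  qed
  note G = G0 kpos
  define \<mu> where "\<mu> = exp (\<i> * complex_of_real \<theta>)"
  define \<nu> where "\<nu> = exp (- \<i> * complex_of_real \<theta>)"
  define L where "L = complex_of_real lam"
  have mu: "\<mu> = Complex (cos \<theta>) (sin \<theta>)"
    unfolding \<mu>_def cis_conv_exp[symmetric] by (simp add: complex_eq_iff)
  have nu: "\<nu> = Complex (cos \<theta>) (- sin \<theta>)"
  proof -
    have "\<nu> = cis (- \<theta>)" unfolding \<nu>_def cis_conv_exp by simp
    then show ?thesis by (simp add: complex_eq_iff)
  qed
  have sinpos: "sin \<theta> > 0" using assms(8,9) by (rule sin_gt_zero)
  have cnu: "cnj \<nu> = \<mu>" and cmu: "cnj \<mu> = \<nu>" unfolding mu nu by (simp_all add: complex_eq_iff)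
  have prod: "cnj \<mu> * \<mu> = 1" unfolding mu
    using sin_cos_squared_add3[of \<theta>] by (simp add: complex_eq_iff algebra_simps)
  have prod': "cnj \<nu> * \<nu> = 1" unfolding nu
    using sin_cos_squared_add3[of \<theta>] by (simp add: complex_eq_iff algebra_simps)
  have sq: "\<mu>^2 \<noteq> 1"
  proof
    assume "\<mu>^2 = 1"
    then have "(\<mu> - 1) * (\<mu> + 1) = 0" by (simp add: algebra_simps power2_eq_square)
    then have "\<mu> - 1 = 0 \<or> \<mu> + 1 = 0" by simp
    then have "Im (\<mu> - 1) = 0 \<or> Im (\<mu> + 1) = 0" by (auto dest: arg_cong[where f=Im])
    then have "Im \<mu> = 0" by simp
    with sinpos show False by (simp add: mu)
  qed
  have sq': "\<nu>^2 \<noteq> 1"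
  proof
    assume "\<nu>^2 = 1"
    then have "cnj (\<nu>^2) = 1" by simp
    then have "\<mu>^2 = 1" by (simp add: cnu)
    with sq show False ..
  qed
  have Lmu: "2 * L = of_nat k * (\<mu> + cnj \<mu>)"
    unfolding L_def assms(7) mu by (simp add: complex_eq_iff)
  have Lnu: "2 * L = of_nat k * (\<nu> + cnj \<nu>)"
    unfolding L_def assms(7) nu by (simp add: complex_eq_iff)
  have Lr: "cnj L = L" by (simp add: L_def)
  have ev: "is_eigenvalue_on UNIV (adj_matrix E) L" using assms(4) by (simp add: L_def)
  have e1: "is_eigenvalue_on (arcs E) (grover_U k) \<mu>"
    by (rule exists_eig[OF G prod sq Lmu ev])
  have e2: "is_eigenvalue_on (arcs E) (grover_U k) \<nu>"
    by (rule exists_eig[OF G prod' sq' Lnu ev])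
  define s where "s = 2 * of_nat k - L * (\<mu> + \<nu>)"
  have sr: "s = complex_of_real (2 * real k - 2 * lam * cos \<theta>)"
    unfolding s_def L_def mu nu by (simp add: complex_eq_iff)
  have third: "\<exists>c. Re c = 0 \<and>
                (\<forall>x\<in>arcs E. \<forall>y\<in>arcs E.
                   Fp x y - Fm x y =
                   c * (\<Sum>u\<in>UNIV. \<Sum>v\<in>UNIV.
                          tail_inc u x * El u v * head_inc v y
                        - head_inc u x * El u v * tail_inc v y))"
    if El: "orth_proj_onto UNIV (eigenspace_on UNIV (adj_matrix E) L) El"
      and Fp: "orth_proj_onto (arcs E) (eigenspace_on (arcs E) (grover_U k) \<mu>) Fp"
      and Fm: "orth_proj_onto (arcs E) (eigenspace_on (arcs E) (grover_U k) \<nu>) Fm"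
    for El Fp Fm
  proof (intro exI conjI ballI)
    show "Re ((\<mu> - \<nu>) / s) = 0"
      unfolding sr mu nu by (simp add: Re_divide)
    fix x y assume x: "x \<in> arcs E" and y: "y \<in> arcs E"
    obtain a b where xab: "x = (a,b)" by (cases x)
    obtain c d where ycd: "y = (c,d)" by (cases y)
    have pf: "Fp (a,b) (c,d) = (El b d - \<mu> * El b c - \<nu> * El a d + El a c) / s"
      using proj_formula[OF G prod sq Lmu Lr El Fp x[unfolded xab] y[unfolded ycd]]
      by (simp add: cmu s_def)
    have mf: "Fm (a,b) (c,d) = (El b d - \<nu> * El b c - \<mu> * El a d + El a c) / s"
      using proj_formula[OF G prod' sq' Lnu Lr El Fm x[unfolded xab] y[unfolded ycd]]
      unfolding cnu s_def by (simp only: add.commute[of \<nu> \<mu>])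
    show "Fp x y - Fm x y = (\<mu> - \<nu>) / s * (\<Sum>u\<in>UNIV. \<Sum>v\<in>UNIV.
                          tail_inc u x * El u v * head_inc v y
                        - head_inc u x * El u v * tail_inc v y)"
    proof -
      have "(El b d - \<mu> * El b c - \<nu> * El a d + El a c) - (El b d - \<nu> * El b c - \<mu> * El a d + El a c)
          = (\<mu> - \<nu>) * (El a d - El b c)" by (simp add: algebra_simps)
      then have "Fp (a,b) (c,d) - Fm (a,b) (c,d) = (\<mu> - \<nu>) * (El a d - El b c) / s"
        unfolding pf mf by (metis diff_divide_distrib)
      then show ?thesis unfolding xab ycd inc_sum by simp
    qed
  qed
  show ?thesis
    using e1 e2 third unfolding \<mu>_def \<nu>_def L_def by blast
qed

end
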